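(* Consider two simple totally unimodular matrices $$A_1=\begin{pmatrix}B&0&0&0\\ b_1^t&1&0&1\\ b_2^t&0&1&1\end{pmatrix},\qquad A_2=\begin{pmatrix}c_1^t&1&0&1\\ c_2^t&0&1&1\\ C&0&0&0\end{pmatrix},$$ where $B\in M_{g_1,n_1}(\mathbb{Z})$, $C\in M_{g_2,n_2}(\mathbb{Z})$ and $b_1,b_2,c_1,c_2$ are integer vectors, and assume that $\overline{Q_i}$ is well-suited for $A_i$ for $i=1,2$. Then one can write $$\overline{Q_1}=\begin{pmatrix}Q_1&r_1&s_1\\ r_1^t&1&-1/2\\ s_1^t&-1/2&1\end{pmatrix},\qquad \overline{Q_2}=\begin{pmatrix}1&-1/2&r_2^t\\ -1/2&1&s_2^t\\ r_2&s_2&Q_2\end{pmatrix}$$ with $Q_i\in M_{g_i,g_i}(\mathbb{R})$ and $r_i,s_i\in\mathbb{R}^{g_i}$, and, setting $$M=\tfrac43\left(r_1r_2^t+s_1s_2^t\right)+\tfrac23\left(r_1s_2^t+s_1r_2^t\right)\in M_{g_1,g_2}(\mathbb{R}),$$ the matrix $$\overline{Q}:=\begin{pmatrix}Q_1&r_1&s_1&M\\ r_1^t&1&-1/2&r_2^t\\ s_1^t&-1/2&1&s_2^t\\ M^t&r_2&s_2&Q_2\end{pmatrix}\ \text{ is well-suited for }\ A=\begin{pmatrix}B&0&0&0&0\\ b_1^t&c_1^t&1&0&1\\ b_2^t&c_2^t&0&1&1\\ 0&C&0&0&0\end{pmatrix}.$$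
   Context: A real matrix is totally unimodular if every square submatrix has determinant $-1,0$ or $1$; it is simple if it has no zero column and no two proportional columns. For a simple totally unimodular $A\in M_{g,n}(\mathbb{Z})$, a symmetric matrix $Q\in M_{g,g}(\mathbb{R})$ is well-suited for $A$ if $Q$ is positive definite and for every $\xi\in\mathbb{Z}^g\setminus\{0\}$ one has $\xi^tQ\xi\ge1$, with equality if and only if $\xi$ or $-\xi$ is a column vector of $A$. *)

theory Defs
  imports "Jordan_Normal_Form.Determinant" "Jordan_Normal_Form.DL_Submatrix"
begin

definition totally_unimodular :: "int mat \<Rightarrow> bool" where
  "totally_unimodular A \<longleftrightarrow>
     (\<forall>I J. I \<subseteq> {..<dim_row A} \<longrightarrow> J \<subseteq> {..<dim_col A} \<longrightarrow> card I = card J \<longrightarrow>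
        det (submatrix A I J) \<in> {-1, 0, 1})"

definition simple_mat :: "int mat \<Rightarrow> bool" where
  "simple_mat A \<longleftrightarrow>
     (\<forall>j < dim_col A. col A j \<noteq> 0\<^sub>v (dim_row A)) \<and>
     (\<forall>i < dim_col A. \<forall>j < dim_col A. i \<noteq> j \<longrightarrow>
        \<not> (\<exists>c::real. map_vec real_of_int (col A i) = c \<cdot>\<^sub>v map_vec real_of_int (col A j)))"

definition positive_definite_mat :: "real mat \<Rightarrow> bool" where
  "positive_definite_mat Q \<longleftrightarrow> square_mat Q \<and>
     (\<forall>x \<in> carrier_vec (dim_row Q). x \<noteq> 0\<^sub>v (dim_row Q) \<longrightarrow> x \<bullet> (Q *\<^sub>v x) > 0)"

definition well_suited :: "real mat \<Rightarrow> int mat \<Rightarrow> bool" where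
  "well_suited Q A \<longleftrightarrow>
     Q \<in> carrier_mat (dim_row A) (dim_row A) \<and> Q = transpose_mat Q \<and>
     positive_definite_mat Q \<and>
     (\<forall>\<xi> \<in> carrier_vec (dim_row A). \<xi> \<noteq> 0\<^sub>v (dim_row A) \<longrightarrow>
        (let q = map_vec real_of_int \<xi> \<bullet> (Q *\<^sub>v map_vec real_of_int \<xi>) in
          q \<ge> 1 \<and> (q = 1 \<longleftrightarrow> (\<exists>j < dim_col A. col A j = \<xi> \<or> col A j = - \<xi>))))"

definition matA1 :: "nat \<Rightarrow> nat \<Rightarrow> int mat \<Rightarrow> int vec \<Rightarrow> int vec \<Rightarrow> int mat" where
  "matA1 g1 n1 B b1 b2 = mat (g1 + 2) (n1 + 3) (\<lambda>(i, j).
     if i < g1 then (if j < n1 then B $$ (i, j) else 0)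
     else if i = g1 then (if j < n1 then b1 $ j else [1, 0, 1] ! (j - n1))
     else (if j < n1 then b2 $ j else [0, 1, 1] ! (j - n1)))"

definition matA2 :: "nat \<Rightarrow> nat \<Rightarrow> int mat \<Rightarrow> int vec \<Rightarrow> int vec \<Rightarrow> int mat" where
  "matA2 g2 n2 C c1 c2 = mat (g2 + 2) (n2 + 3) (\<lambda>(i, j).
     if i = 0 then (if j < n2 then c1 $ j else [1, 0, 1] ! (j - n2))
     else if i = 1 then (if j < n2 then c2 $ j else [0, 1, 1] ! (j - n2))
     else (if j < n2 then C $$ (i - 2, j) else 0))"

definition matA :: "nat \<Rightarrow> nat \<Rightarrow> nat \<Rightarrow> nat \<Rightarrow> int mat \<Rightarrow> int vec \<Rightarrow> int vec
    \<Rightarrow> int mat \<Rightarrow> int vec \<Rightarrow> int vec \<Rightarrow> int mat" where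
  "matA g1 n1 g2 n2 B b1 b2 C c1 c2 = mat (g1 + g2 + 2) (n1 + n2 + 3) (\<lambda>(i, j).
     if i < g1 then (if j < n1 then B $$ (i, j) else 0)
     else if i = g1 then
       (if j < n1 then b1 $ j else if j < n1 + n2 then c1 $ (j - n1) else [1, 0, 1] ! (j - n1 - n2))
     else if i = g1 + 1 then
       (if j < n1 then b2 $ j else if j < n1 + n2 then c2 $ (j - n1) else [0, 1, 1] ! (j - n1 - n2))
     else (if n1 \<le> j \<and> j < n1 + n2 then C $$ (i - g1 - 2, j - n1) else 0))"

definition glued_form :: "nat \<Rightarrow> nat \<Rightarrow> real mat \<Rightarrow> real mat \<Rightarrow> real mat" where
  "glued_form g1 g2 Qb1 Qb2 =
    (let Q1 = (\<lambda>i j. Qb1 $$ (i, j)); r1 = (\<lambda>i. Qb1 $$ (i, g1)); s1 = (\<lambda>i. Qb1 $$ (i, g1 + 1));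
         Q2 = (\<lambda>i j. Qb2 $$ (i + 2, j + 2)); r2 = (\<lambda>i. Qb2 $$ (i + 2, 0)); s2 = (\<lambda>i. Qb2 $$ (i + 2, 1));
         M = (\<lambda>i j. 4/3 * (r1 i * r2 j + s1 i * s2 j) + 2/3 * (r1 i * s2 j + s1 i * r2 j))
     in mat (g1 + g2 + 2) (g1 + g2 + 2) (\<lambda>(i, j).
       if i < g1 then
         (if j < g1 then Q1 i j else if j = g1 then r1 i else if j = g1 + 1 then s1 i
          else M i (j - g1 - 2))
       else if i = g1 then
         (if j < g1 then r1 j else if j = g1 then 1 else if j = g1 + 1 then - 1/2
          else r2 (j - g1 - 2))
       else if i = g1 + 1 then
         (if j < g1 then s1 j else if j = g1 then - 1/2 else if j = g1 + 1 then 1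
          else s2 (j - g1 - 2))
       else
         (if j < g1 then M j (i - g1 - 2) else if j = g1 then r2 (i - g1 - 2)
          else if j = g1 + 1 then s2 (i - g1 - 2) else Q2 (i - g1 - 2) (j - g1 - 2))))"

end

theory Submission
  imports Defs
begin


definition QF :: "real mat \<Rightarrow> nat \<Rightarrow> (nat \<Rightarrow> real) \<Rightarrow> real" where
  "QF Q n w = (\<Sum>i<n. \<Sum>j<n. w i * Q $$ (i,j) * w j)"

lemma qf_eq:
  assumes "Q \<in> carrier_mat n n" "v \<in> carrier_vec n"
  shows "v \<bullet> (Q *\<^sub>v v) = QF Q n (\<lambda>i. v $ i)"
  using assms unfolding QF_def
  by (auto simp: scalar_prod_def sum_distrib_left atLeast0LessThan mult.assoc intro!: sum.cong)

lemma sum_split_add: "(\<Sum>i<m+n. f i) = (\<Sum>i<m. f i) + (\<Sum>i<(n::nat). f (m+i))"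
  by (induction n arbitrary: f) (auto simp: add.assoc)

lemma sum_lt2: "(\<Sum>i<Suc (Suc n). f i) = f 0 + f 1 + (\<Sum>i<n. f (i+2))"
  unfolding sum.lessThan_Suc_shift by (simp add: add.assoc)

lemma sum_lt2': "(\<Sum>i<(n::nat)+2. f i) = (\<Sum>i<n. f i) + f n + f (n+1)"
  by simp

definition "F1 (Q::real mat) g (w::nat\<Rightarrow>real) = (\<Sum>i<g. \<Sum>j<g. w i * Q $$ (i,j) * w j)"
definition "R1 (Q::real mat) g (w::nat\<Rightarrow>real) = (\<Sum>i<g. w i * Q $$ (i,g))"
definition "S1 (Q::real mat) g (w::nat\<Rightarrow>real) = (\<Sum>i<g. w i * Q $$ (i,g+1))"

lemma L1:
  assumes sym: "\<And>i j. i < g+2 \<Longrightarrow> j < g+2 \<Longrightarrow> Q $$ (i,j) = Q $$ (j,i)"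
  shows "QF Q (g+2) w = F1 Q g w + 2 * w g * R1 Q g w + 2 * w (g+1) * S1 Q g w
     + (w g)^2 * Q $$ (g,g) + 2 * w g * w (g+1) * Q $$ (g,g+1) + (w (g+1))^2 * Q $$ (g+1,g+1)"
proof -
  have a: "(\<Sum>j<g. w g * Q $$ (g,j) * w j) = w g * R1 Q g w"
    unfolding R1_def sum_distrib_left by (rule sum.cong) (use sym in auto)
  have b: "(\<Sum>j<g. w (g+1) * Q $$ (g+1,j) * w j) = w (g+1) * S1 Q g w"
    unfolding S1_def sum_distrib_left by (rule sum.cong) (use sym in auto)
  have c: "(\<Sum>i<g. w i * Q $$ (i,g) * w g) = w g * R1 Q g w"
    unfolding R1_def sum_distrib_left by (rule sum.cong) auto
  have d: "(\<Sum>i<g. w i * Q $$ (i,g+1) * w (g+1)) = w (g+1) * S1 Q g w"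
    unfolding S1_def sum_distrib_left by (rule sum.cong) auto
  have e: "Q $$ (g+1, g) = Q $$ (g, g+1)" using sym by auto
  show ?thesis
    unfolding QF_def sum_lt2' sum.distrib a b c d e F1_def[symmetric]
    by (simp add: power2_eq_square algebra_simps)
qed

definition "F2 (Q::real mat) g (w::nat\<Rightarrow>real) = (\<Sum>i<g. \<Sum>j<g. w (i+2) * Q $$ (i+2,j+2) * w (j+2))"
definition "R2 (Q::real mat) g (w::nat\<Rightarrow>real) = (\<Sum>i<g. w (i+2) * Q $$ (i+2,0))"
definition "S2 (Q::real mat) g (w::nat\<Rightarrow>real) = (\<Sum>i<g. w (i+2) * Q $$ (i+2,1))"

lemma L2:
  assumes sym: "\<And>i j. i < g+2 \<Longrightarrow> j < g+2 \<Longrightarrow> Q $$ (i,j) = Q $$ (j,i)"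
  shows "QF Q (g+2) w = F2 Q g w + 2 * w 0 * R2 Q g w + 2 * w 1 * S2 Q g w
     + (w 0)^2 * Q $$ (0,0) + 2 * w 0 * w 1 * Q $$ (0,1) + (w 1)^2 * Q $$ (1,1)"
proof -
  have a: "(\<Sum>j<g. w 0 * Q $$ (0,j+2) * w (j+2)) = w 0 * R2 Q g w"
    unfolding R2_def sum_distrib_left by (rule sum.cong) (use sym in auto)
  have b: "(\<Sum>j<g. w 1 * Q $$ (1,j+2) * w (j+2)) = w 1 * S2 Q g w"
    unfolding S2_def sum_distrib_left by (rule sum.cong) (use sym in auto)
  have c: "(\<Sum>i<g. w (i+2) * Q $$ (i+2,0) * w 0) = w 0 * R2 Q g w"
    unfolding R2_def sum_distrib_left by (rule sum.cong) auto
  have d: "(\<Sum>i<g. w (i+2) * Q $$ (i+2,1) * w 1) = w 1 * S2 Q g w"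
    unfolding S2_def sum_distrib_left by (rule sum.cong) auto
  have e: "Q $$ (1, 0) = Q $$ (0, 1)" using sym by auto
  have f: "g + 2 = Suc (Suc g)" by simp
  show ?thesis
    unfolding QF_def f sum_lt2 sum.distrib a b c d e F2_def[symmetric]
    by (simp add: power2_eq_square algebra_simps)
qed

context
  fixes g1 g2 :: nat and Qb1 Qb2 :: "real mat"
begin

abbreviation "G \<equiv> glued_form g1 g2 Qb1 Qb2"
definition "MM i k = 4/3 * (Qb1 $$ (i,g1) * Qb2 $$ (k+2,0) + Qb1 $$ (i,g1+1) * Qb2 $$ (k+2,1))
   + 2/3 * (Qb1 $$ (i,g1) * Qb2 $$ (k+2,1) + Qb1 $$ (i,g1+1) * Qb2 $$ (k+2,0))"

lemma G_xx: "i < g1 \<Longrightarrow> j < g1 \<Longrightarrow> G $$ (i,j) = Qb1 $$ (i,j)"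
  by (simp add: glued_form_def Let_def)
lemma G_xa: "i < g1 \<Longrightarrow> G $$ (i,g1) = Qb1 $$ (i,g1)" "i < g1 \<Longrightarrow> G $$ (g1,i) = Qb1 $$ (i,g1)"
  "i < g1 \<Longrightarrow> G $$ (i,g1+1) = Qb1 $$ (i,g1+1)" "i < g1 \<Longrightarrow> G $$ (g1+1,i) = Qb1 $$ (i,g1+1)"
  by (simp_all add: glued_form_def Let_def)
lemma G_ab: "G $$ (g1,g1) = 1" "G $$ (g1,g1+1) = -1/2" "G $$ (g1+1,g1) = -1/2" "G $$ (g1+1,g1+1) = 1"
  by (simp_all add: glued_form_def Let_def)
lemma G_ay: "k < g2 \<Longrightarrow> G $$ (g1, g1+(k+2)) = Qb2 $$ (k+2,0)"
  "k < g2 \<Longrightarrow> G $$ (g1+(k+2), g1) = Qb2 $$ (k+2,0)"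
  "k < g2 \<Longrightarrow> G $$ (g1+1, g1+(k+2)) = Qb2 $$ (k+2,1)"
  "k < g2 \<Longrightarrow> G $$ (g1+(k+2), g1+1) = Qb2 $$ (k+2,1)"
  by (simp_all add: glued_form_def Let_def)
lemma G_xy: "i < g1 \<Longrightarrow> k < g2 \<Longrightarrow> G $$ (i, g1+(k+2)) = MM i k"
  "i < g1 \<Longrightarrow> k < g2 \<Longrightarrow> G $$ (g1+(k+2), i) = MM i k"
  by (simp_all add: glued_form_def Let_def MM_def)
lemma G_yy: "k < g2 \<Longrightarrow> l < g2 \<Longrightarrow> G $$ (g1+(k+2), g1+(l+2)) = Qb2 $$ (k+2,l+2)"
  by (simp_all add: glued_form_def Let_def)

lemma dsum_prod: "(\<Sum>i\<in>A. \<Sum>k\<in>B. (c::real) * (f i * g k)) = c * ((\<Sum>i\<in>A. f i) * (\<Sum>k\<in>B. g k))"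
  unfolding sum_product by (simp add: sum_distrib_left)

definition "XX w = (\<Sum>i<g1. \<Sum>k<g2. w i * MM i k * w (g1+(k+2)))"

lemma XX_eq: "XX w = 4/3 * (R1 Qb1 g1 w * R2 Qb2 g2 (\<lambda>k. w (g1+k)) + S1 Qb1 g1 w * S2 Qb2 g2 (\<lambda>k. w (g1+k)))
   + 2/3 * (R1 Qb1 g1 w * S2 Qb2 g2 (\<lambda>k. w (g1+k)) + S1 Qb1 g1 w * R2 Qb2 g2 (\<lambda>k. w (g1+k)))"
proof -
  have "XX w = (\<Sum>i<g1. \<Sum>k<g2. 4/3 * ((w i * Qb1 $$ (i,g1)) * (w (g1+(k+2)) * Qb2 $$ (k+2,0)))
     + 4/3 * ((w i * Qb1 $$ (i,g1+1)) * (w (g1+(k+2)) * Qb2 $$ (k+2,1)))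
     + 2/3 * ((w i * Qb1 $$ (i,g1)) * (w (g1+(k+2)) * Qb2 $$ (k+2,1)))
     + 2/3 * ((w i * Qb1 $$ (i,g1+1)) * (w (g1+(k+2)) * Qb2 $$ (k+2,0))))"
    unfolding XX_def MM_def by (intro sum.cong refl) (simp add: algebra_simps)
  also have "\<dots> = 4/3 * (R1 Qb1 g1 w * R2 Qb2 g2 (\<lambda>k. w (g1+k)) + S1 Qb1 g1 w * S2 Qb2 g2 (\<lambda>k. w (g1+k)))
   + 2/3 * (R1 Qb1 g1 w * S2 Qb2 g2 (\<lambda>k. w (g1+k)) + S1 Qb1 g1 w * R2 Qb2 g2 (\<lambda>k. w (g1+k)))"
    unfolding R1_def R2_def S1_def S2_def sum.distrib dsum_prod by (simp add: algebra_simps)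
  finally show ?thesis .
qed

lemma LG: "QF G (g1+g2+2) w = F1 Qb1 g1 w + F2 Qb2 g2 (\<lambda>k. w (g1+k))
   + 2 * w g1 * (R1 Qb1 g1 w + R2 Qb2 g2 (\<lambda>k. w (g1+k)))
   + 2 * w (g1+1) * (S1 Qb1 g1 w + S2 Qb2 g2 (\<lambda>k. w (g1+k)))
   + (w g1)^2 - w g1 * w (g1+1) + (w (g1+1))^2 + 2 * XX w"
proof -
  have f: "g1+g2+2 = g1 + Suc (Suc g2)" by simp
  have p1: "(\<Sum>i<g1. \<Sum>j<g1. w i * G $$ (i, j) * w j) = F1 Qb1 g1 w"
    unfolding F1_def by (intro sum.cong refl) (simp add: G_xx)
  have p2: "(\<Sum>j<g1. w g1 * G $$ (g1, j) * w j) = w g1 * R1 Qb1 g1 w"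
    unfolding R1_def sum_distrib_left by (intro sum.cong refl) (simp add: G_xa[simplified])
  have p3: "(\<Sum>j<g1. w (g1+1) * G $$ (g1+1, j) * w j) = w (g1+1) * S1 Qb1 g1 w"
    unfolding S1_def sum_distrib_left by (intro sum.cong refl) (simp add: G_xa[simplified])
  have p4: "(\<Sum>i<g2. \<Sum>j<g1. w (g1 + (i + 2)) * G $$ (g1 + (i + 2), j) * w j) = XX w"
    unfolding XX_def by (subst sum.swap) (intro sum.cong refl, simp add: G_xy[simplified])
  have p5: "(\<Sum>i<g1. w i * G $$ (i, g1) * w g1) = w g1 * R1 Qb1 g1 w"
    unfolding R1_def sum_distrib_left by (intro sum.cong refl) (simp add: G_xa[simplified])
  have p9: "(\<Sum>i<g2. w (g1 + (i + 2)) * G $$ (g1 + (i + 2), g1) * w g1) = w g1 * R2 Qb2 g2 (\<lambda>k. w (g1+k))"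
    unfolding R2_def sum_distrib_left by (intro sum.cong refl) (simp add: G_ay[simplified])
  have p10: "(\<Sum>i<g1. w i * G $$ (i, g1+1) * w (g1+1)) = w (g1+1) * S1 Qb1 g1 w"
    unfolding S1_def sum_distrib_left by (intro sum.cong refl) (simp add: G_xa[simplified])
  have p11: "(\<Sum>i<g2. w (g1 + (i + 2)) * G $$ (g1 + (i + 2), g1+1) * w (g1+1)) = w (g1+1) * S2 Qb2 g2 (\<lambda>k. w (g1+k))"
    unfolding S2_def sum_distrib_left by (intro sum.cong refl) (simp add: G_ay[simplified])
  have p12: "(\<Sum>i<g1. \<Sum>ia<g2. w i * G $$ (i, g1 + (ia + 2)) * w (g1 + (ia + 2))) = XX w"
    unfolding XX_def by (intro sum.cong refl) (simp add: G_xy[simplified])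
  have p13: "(\<Sum>i<g2. w g1 * G $$ (g1, g1 + (i + 2)) * w (g1 + (i + 2))) = w g1 * R2 Qb2 g2 (\<lambda>k. w (g1+k))"
    unfolding R2_def sum_distrib_left by (intro sum.cong refl) (simp add: G_ay[simplified])
  have p14: "(\<Sum>i<g2. w (g1+1) * G $$ (g1+1, g1 + (i + 2)) * w (g1 + (i + 2))) = w (g1+1) * S2 Qb2 g2 (\<lambda>k. w (g1+k))"
    unfolding S2_def sum_distrib_left by (intro sum.cong refl) (simp add: G_ay[simplified])
  have p15: "(\<Sum>i<g2. \<Sum>ia<g2. w (g1 + (i + 2)) * G $$ (g1 + (i + 2), g1 + (ia + 2)) * w (g1 + (ia + 2)))
     = F2 Qb2 g2 (\<lambda>k. w (g1+k))"
    unfolding F2_def by (intro sum.cong refl) (simp add: G_yy[simplified])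
  show ?thesis
    unfolding QF_def f sum_split_add sum_lt2 sum.distrib add_0_right
    apply (simp only: p1 p2 p3 p4 p5 p9 p10 p11 p12 p13 p14 p15 G_ab)
    by (simp add: power2_eq_square algebra_simps)
qed

end


definition phi :: "real \<Rightarrow> real \<Rightarrow> real" where "phi u v = u^2 - u*v + v^2"

lemma phi_nonneg: "phi u v \<ge> 0"
proof -
  have "phi u v = (u - v/2)^2 + 3/4 * v^2" unfolding phi_def by (simp add: power2_eq_square algebra_simps)
  thus ?thesis by (metis add_nonneg_nonneg zero_le_power2 mult_nonneg_nonneg zero_le_divide_iff zero_le_numeral)
qed

lemma phi_pos: "(u,v) \<noteq> (0,0) \<Longrightarrow> phi u v > 0"
proof -
  assume h: "(u,v) \<noteq> (0,0)"
  have e: "phi u v = (u - v/2)^2 + 3/4 * v^2" unfolding phi_def by (simp add: power2_eq_square algebra_simps)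
  show ?thesis
  proof (cases "v = 0")
    case True thus ?thesis using h unfolding phi_def by simp
  next
    case False thus ?thesis unfolding e by (intro add_nonneg_pos) auto
  qed
qed

lemma cover_aux:
  fixes w1 w2 :: real
  assumes "0 \<le> w2" "w2 \<le> w1" "w1 \<le> 1"
  shows "phi w1 w2 \<le> 1/3 \<or> phi (w1-1) w2 \<le> 1/3 \<or> phi (w1-1) (w2-1) \<le> 1/3"
proof (rule ccontr)
  assume "\<not> ?thesis"
  hence A: "phi w1 w2 > 1/3" "phi (w1-1) w2 > 1/3" "phi (w1-1) (w2-1) > 1/3" by auto
  have id: "(1-w1) * (phi w1 w2 - 1/3) + (w1-w2) * (phi (w1-1) w2 - 1/3) + w2 * (phi (w1-1) (w2-1) - 1/3)
     = w1 - phi w1 w2 - 1/3" unfolding phi_def by (simp add: power2_eq_square field_simps)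
  have sq: "phi w1 w2 - w1 + 1/3 = (w1 - w2/2 - 1/2)^2 + 3/4 * (w2 - 1/3)^2"
    unfolding phi_def by (simp add: power2_eq_square algebra_simps)
  have "0 \<le> (w1 - w2/2 - 1/2)^2 + 3/4 * (w2 - 1/3)^2" by simp
  hence le: "w1 - phi w1 w2 - 1/3 \<le> 0" using sq by linarith
  have t1: "(1-w1) * (phi w1 w2 - 1/3) \<ge> 0" using A assms by simp
  have t2: "(w1-w2) * (phi (w1-1) w2 - 1/3) \<ge> 0" using A assms by simp
  have t3: "w2 * (phi (w1-1) (w2-1) - 1/3) \<ge> 0" using A assms by simp
  have "(1-w1) > 0 \<or> w1 - w2 > 0 \<or> w2 > 0" using assms by linarith
  hence "(1-w1) * (phi w1 w2 - 1/3) > 0 \<or> (w1-w2) * (phi (w1-1) w2 - 1/3) > 0 \<or> w2 * (phi (w1-1) (w2-1) - 1/3) > 0"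
    using A by auto
  thus False using id le t1 t2 t3 by linarith
qed

lemma phi_swap: "phi u v = phi v u" unfolding phi_def by (simp add: algebra_simps)

lemma cover: "\<exists>z1 z2 :: int. phi (of_int z1 + p1) (of_int z2 + p2) \<le> 1/3"
proof -
  define w1 where "w1 = p1 - of_int (floor p1)"
  define w2 where "w2 = p2 - of_int (floor p2)"
  have b: "0 \<le> w1" "w1 \<le> 1" "0 \<le> w2" "w2 \<le> 1" unfolding w1_def w2_def
    using floor_correct[of p1] floor_correct[of p2] by linarith+
  have e: "\<And>e1 e2. phi (of_int (- floor p1 - e1) + p1) (of_int (- floor p2 - e2) + p2) = phi (w1 - of_int e1) (w2 - of_int e2)"
    unfolding w1_def w2_def by (simp add: algebra_simps)
  have H: "\<And>e1 e2. phi (w1 - of_int e1) (w2 - of_int e2) \<le> 1/3 \<Longrightarrow> ?thesis"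
    by (metis e)
  show ?thesis
  proof (cases "w2 \<le> w1")
    case True
    from cover_aux[OF b(3) True b(2)] show ?thesis
    proof (elim disjE)
      assume "phi w1 w2 \<le> 1/3" thus ?thesis using H[of 0 0] by simp
    next
      assume "phi (w1-1) w2 \<le> 1/3" thus ?thesis using H[of 1 0] by simp
    next
      assume "phi (w1-1) (w2-1) \<le> 1/3" thus ?thesis using H[of 1 1] by simp
    qed
  next
    case False
    hence F: "w1 \<le> w2" by simp
    from cover_aux[OF b(1) F b(4)] show ?thesis
    proof (elim disjE)
      assume "phi w2 w1 \<le> 1/3" thus ?thesis using H[of 0 0] phi_swap[of w2 w1] by simp
    next
      assume "phi (w2-1) w1 \<le> 1/3" thus ?thesis using H[of 0 1] phi_swap[of "w2-1" w1] by simp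
    next
      assume "phi (w2-1) (w1-1) \<le> 1/3" thus ?thesis using H[of 1 1] phi_swap[of "w2-1" "w1-1"] by simp
    qed
  qed
qed

lemma F1_cong: "(\<And>i. i < g \<Longrightarrow> w i = w' i) \<Longrightarrow> F1 Q g w = F1 Q g w'"
  unfolding F1_def by (intro sum.cong refl) auto
lemma R1_cong: "(\<And>i. i < g \<Longrightarrow> w i = w' i) \<Longrightarrow> R1 Q g w = R1 Q g w'"
  unfolding R1_def by (intro sum.cong refl) auto
lemma S1_cong: "(\<And>i. i < g \<Longrightarrow> w i = w' i) \<Longrightarrow> S1 Q g w = S1 Q g w'"
  unfolding S1_def by (intro sum.cong refl) auto
lemma F2_cong: "(\<And>i. i < g \<Longrightarrow> w (i+2) = w' (i+2)) \<Longrightarrow> F2 Q g w = F2 Q g w'"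
  unfolding F2_def by (intro sum.cong refl) auto
lemma R2_cong: "(\<And>i. i < g \<Longrightarrow> w (i+2) = w' (i+2)) \<Longrightarrow> R2 Q g w = R2 Q g w'"
  unfolding R2_def by (intro sum.cong refl) auto
lemma S2_cong: "(\<And>i. i < g \<Longrightarrow> w (i+2) = w' (i+2)) \<Longrightarrow> S2 Q g w = S2 Q g w'"
  unfolding S2_def by (intro sum.cong refl) auto
lemma QF_cong: "(\<And>i. i < n \<Longrightarrow> w i = w' i) \<Longrightarrow> QF Q n w = QF Q n w'"
  unfolding QF_def by (intro sum.cong refl) auto

lemma F1_zero: "(\<And>i. i < g \<Longrightarrow> w i = 0) \<Longrightarrow> F1 Q g w = 0 \<and> R1 Q g w = 0 \<and> S1 Q g w = 0"
  unfolding F1_def R1_def S1_def by (auto intro!: sum.neutral)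
lemma F2_zero: "(\<And>i. i < g \<Longrightarrow> w (i+2) = 0) \<Longrightarrow> F2 Q g w = 0 \<and> R2 Q g w = 0 \<and> S2 Q g w = 0"
  unfolding F2_def R2_def S2_def by (auto intro!: sum.neutral)

definition "f1 Q g w = F1 Q g w - 4/3 * ((R1 Q g w)^2 + R1 Q g w * S1 Q g w + (S1 Q g w)^2)"
definition "f2 Q g w = F2 Q g w - 4/3 * ((R2 Q g w)^2 + R2 Q g w * S2 Q g w + (S2 Q g w)^2)"
definition "pp1 R S = 4/3 * R + 2/3 * S"
definition "pp2 R S = 2/3 * R + 4/3 * S"

lemma core1:
  assumes sym: "\<And>i j. i < g+2 \<Longrightarrow> j < g+2 \<Longrightarrow> Q $$ (i,j) = Q $$ (j,i)"
    and d: "Q $$ (g,g) = 1" "Q $$ (g,g+1) = -1/2" "Q $$ (g+1,g+1) = 1"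
  shows "QF Q (g+2) w = f1 Q g w + phi (w g + pp1 (R1 Q g w) (S1 Q g w)) (w (g+1) + pp2 (R1 Q g w) (S1 Q g w))"
  using L1[OF sym, where w=w] d unfolding f1_def phi_def pp1_def pp2_def by (simp add: power2_eq_square algebra_simps)

lemma core2:
  assumes sym: "\<And>i j. i < g+2 \<Longrightarrow> j < g+2 \<Longrightarrow> Q $$ (i,j) = Q $$ (j,i)"
    and d: "Q $$ (0,0) = 1" "Q $$ (0,1) = -1/2" "Q $$ (1,1) = 1"
  shows "QF Q (g+2) w = f2 Q g w + phi (w 0 + pp1 (R2 Q g w) (S2 Q g w)) (w 1 + pp2 (R2 Q g w) (S2 Q g w))"
  using L2[OF sym, where w=w] d unfolding f2_def phi_def pp1_def pp2_def by (simp add: power2_eq_square algebra_simps)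

lemma alg: "(X1::real) + X2 + 2 * a * (R + R') + 2 * b * (S + S') + a^2 - a * b + b^2
   + 2 * (4/3 * (R * R' + S * S') + 2/3 * (R * S' + S * R'))
  = (X1 - 4/3 * (R^2 + R * S + S^2)) + (X2 - 4/3 * (R'^2 + R' * S' + S'^2))
   + phi (a + pp1 R S + pp1 R' S') (b + pp2 R S + pp2 R' S')"
  unfolding phi_def pp1_def pp2_def by (simp add: power2_eq_square algebra_simps add_divide_distrib)

lemma coreG: "QF (glued_form g1 g2 Qb1 Qb2) (g1+g2+2) w = f1 Qb1 g1 w + f2 Qb2 g2 (\<lambda>k. w (g1+k))
   + phi (w g1 + pp1 (R1 Qb1 g1 w) (S1 Qb1 g1 w) + pp1 (R2 Qb2 g2 (\<lambda>k. w (g1+k))) (S2 Qb2 g2 (\<lambda>k. w (g1+k))))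
         (w (g1+1) + pp2 (R1 Qb1 g1 w) (S1 Qb1 g1 w) + pp2 (R2 Qb2 g2 (\<lambda>k. w (g1+k))) (S2 Qb2 g2 (\<lambda>k. w (g1+k))))"
  unfolding LG XX_eq f1_def f2_def by (rule alg)



definition CC :: "int mat \<Rightarrow> nat \<Rightarrow> (nat \<Rightarrow> int) \<Rightarrow> bool" where
  "CC A n f \<longleftrightarrow> (\<exists>j<dim_col A. (\<forall>i<n. A $$ (i,j) = f i) \<or> (\<forall>i<n. A $$ (i,j) = - f i))"

lemma ws_unpack:
  assumes "well_suited Q A" "n = dim_row A"
  shows "Q \<in> carrier_mat n n"
    and "\<And>i j. i < n \<Longrightarrow> j < n \<Longrightarrow> Q $$ (i,j) = Q $$ (j,i)"
    and "\<And>w. \<exists>i<n. w i \<noteq> 0 \<Longrightarrow> QF Q n w > 0"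
    and "\<And>f. \<exists>i<n. f i \<noteq> 0 \<Longrightarrow> QF Q n (\<lambda>i. real_of_int (f i)) \<ge> 1 \<and>
            (QF Q n (\<lambda>i. real_of_int (f i)) = 1 \<longleftrightarrow> CC A n f)"
proof -
  note ws = assms(1)[unfolded well_suited_def, folded assms(2)]
  show Qc: "Q \<in> carrier_mat n n" using ws by auto
  show "Q $$ (i,j) = Q $$ (j,i)" if "i < n" "j < n" for i j
  proof -
    have "Q $$ (i,j) = transpose_mat Q $$ (i,j)" using ws by metis
    also have "\<dots> = Q $$ (j,i)" using Qc that by simp
    finally show ?thesis .
  qed
  show "QF Q n w > 0" if "\<exists>i<n. w i \<noteq> 0" for w
  proof -
    have v: "vec n w \<in> carrier_vec n" "vec n w \<noteq> 0\<^sub>v n" using that by (auto simp: vec_eq_iff)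
    have "vec n w \<bullet> (Q *\<^sub>v vec n w) > 0" using ws v unfolding positive_definite_mat_def by auto
    also have "vec n w \<bullet> (Q *\<^sub>v vec n w) = QF Q n w"
      by (subst qf_eq[OF Qc v(1)]) (rule QF_cong, simp)
    finally show ?thesis .
  qed
  show "QF Q n (\<lambda>i. real_of_int (f i)) \<ge> 1 \<and>
            (QF Q n (\<lambda>i. real_of_int (f i)) = 1 \<longleftrightarrow> CC A n f)" if "\<exists>i<n. f i \<noteq> 0" for f
  proof -
    have v: "vec n f \<in> carrier_vec n" "vec n f \<noteq> 0\<^sub>v n" using that by (auto simp: vec_eq_iff)
    have mv: "map_vec real_of_int (vec n f) \<in> carrier_vec n" by simp
    have e: "map_vec real_of_int (vec n f) \<bullet> (Q *\<^sub>v map_vec real_of_int (vec n f)) = QF Q n (\<lambda>i. real_of_int (f i))"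
      by (subst qf_eq[OF Qc mv]) (rule QF_cong, simp)
    have c: "(\<exists>j<dim_col A. col A j = vec n f \<or> col A j = - vec n f) \<longleftrightarrow> CC A n f"
      unfolding CC_def using assms(2) by (auto simp: vec_eq_iff)
    have H: "\<forall>\<xi>\<in>carrier_vec n. \<xi> \<noteq> 0\<^sub>v n \<longrightarrow> (let q = map_vec real_of_int \<xi> \<bullet> (Q *\<^sub>v map_vec real_of_int \<xi>) in
          q \<ge> 1 \<and> (q = 1 \<longleftrightarrow> (\<exists>j < dim_col A. col A j = \<xi> \<or> col A j = - \<xi>)))"
      using ws by blast
    show ?thesis using H[rule_format, OF v(1) v(2)] unfolding Let_def e c by simp
  qed
qed

lemma ws_pack:
  assumes "n = dim_row A"
    and Qc: "Q \<in> carrier_mat n n"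
    and sym: "\<And>i j. i < n \<Longrightarrow> j < n \<Longrightarrow> Q $$ (i,j) = Q $$ (j,i)"
    and pd: "\<And>w. \<exists>i<n. w i \<noteq> 0 \<Longrightarrow> QF Q n w > 0"
    and ig: "\<And>f. \<exists>i<n. f i \<noteq> 0 \<Longrightarrow> QF Q n (\<lambda>i. real_of_int (f i)) \<ge> 1 \<and>
            (QF Q n (\<lambda>i. real_of_int (f i)) = 1 \<longleftrightarrow> CC A n f)"
  shows "well_suited Q A"
  unfolding well_suited_def
proof (intro conjI ballI impI)
  show "Q \<in> carrier_mat (dim_row A) (dim_row A)" using Qc assms(1) by simp
  show "Q = transpose_mat Q" using Qc sym by (intro eq_matI) auto
  show "positive_definite_mat Q" unfolding positive_definite_mat_def
  proof (intro conjI ballI impI)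
    show "square_mat Q" using Qc by auto
    fix x :: "real vec" assume x: "x \<in> carrier_vec (dim_row Q)" "x \<noteq> 0\<^sub>v (dim_row Q)"
    have xn: "x \<in> carrier_vec n" using x Qc by auto
    have "\<exists>i<n. x $ i \<noteq> 0" using x Qc by (auto simp: vec_eq_iff)
    hence "QF Q n (\<lambda>i. x $ i) > 0" by (rule pd)
    thus "x \<bullet> (Q *\<^sub>v x) > 0" using qf_eq[OF Qc xn] by simp
  qed
  fix \<xi> :: "int vec" assume xi: "\<xi> \<in> carrier_vec (dim_row A)" "\<xi> \<noteq> 0\<^sub>v (dim_row A)"
  have xn: "\<xi> \<in> carrier_vec n" using xi assms(1) by auto
  have "\<exists>i<n. \<xi> $ i \<noteq> 0" using xi assms(1) by (auto simp: vec_eq_iff)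
  note h = ig[OF this]
  have mv: "map_vec real_of_int \<xi> \<in> carrier_vec n" using xn by simp
  have e: "map_vec real_of_int \<xi> \<bullet> (Q *\<^sub>v map_vec real_of_int \<xi>) = QF Q n (\<lambda>i. real_of_int (\<xi> $ i))"
    by (subst qf_eq[OF Qc mv]) (rule QF_cong, use xn in simp)
  have c: "(\<exists>j<dim_col A. col A j = \<xi> \<or> col A j = - \<xi>) \<longleftrightarrow> CC A n (\<lambda>i. \<xi> $ i)"
    unfolding CC_def using assms(1) xn by (auto simp: vec_eq_iff)
  show "let q = map_vec real_of_int \<xi> \<bullet> (Q *\<^sub>v map_vec real_of_int \<xi>) in 1 \<le> q \<and> (q = 1) = (\<exists>j<dim_col A. col A j = \<xi> \<or> col A j = - \<xi>)"
    unfolding Let_def e c using h by simp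
qed

lemma simple_nz: "simple_mat A \<Longrightarrow> j < dim_col A \<Longrightarrow> \<exists>r<dim_row A. A $$ (r,j) \<noteq> 0"
  unfolding simple_mat_def by (auto simp: vec_eq_iff)

lemma simple_prop: "simple_mat A \<Longrightarrow> i < dim_col A \<Longrightarrow> k < dim_col A \<Longrightarrow> i \<noteq> k \<Longrightarrow>
   (\<And>r. r < dim_row A \<Longrightarrow> real_of_int (A $$ (r,i)) = c * real_of_int (A $$ (r,k))) \<Longrightarrow> False"
proof -
  assume s: "simple_mat A" and ik: "i < dim_col A" "k < dim_col A" "i \<noteq> k"
    and r: "\<And>r. r < dim_row A \<Longrightarrow> real_of_int (A $$ (r,i)) = c * real_of_int (A $$ (r,k))"
  have "map_vec real_of_int (col A i) = c \<cdot>\<^sub>v map_vec real_of_int (col A k)"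
    using ik r by (auto simp: vec_eq_iff)
  thus False using s ik unfolding simple_mat_def by blast
qed

lemma int_eis: "(a::int)^2 - a*b + b^2 = 1 \<Longrightarrow>
   (a = 1 \<and> b = 0) \<or> (a = -1 \<and> b = 0) \<or> (a = 0 \<and> b = 1) \<or> (a = 0 \<and> b = -1) \<or> (a = 1 \<and> b = 1) \<or> (a = -1 \<and> b = -1)"
proof -
  assume h: "a^2 - a*b + b^2 = 1"
  have h1: "(2*a-b)^2 + 3*b^2 = 4" using h by (simp add: power2_eq_square algebra_simps)
  have h2: "(2*b-a)^2 + 3*a^2 = 4" using h by (simp add: power2_eq_square algebra_simps)
  have "0 \<le> (2*a-b)^2" "0 \<le> (2*b-a)^2" by simp_all
  hence "3*b^2 \<le> 4" "3*a^2 \<le> 4" using h1 h2 by linarith+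
  hence "b^2 \<le> 1" "a^2 \<le> 1" by linarith+
  hence "\<bar>b\<bar> \<le> 1" "\<bar>a\<bar> \<le> 1" by (simp_all add: abs_square_le_1)
  hence b: "b \<in> {-1,0,1}" and a: "a \<in> {-1,0,1}" by auto
  show ?thesis using a b h by auto
qed



definition e1 :: "nat \<Rightarrow> int \<Rightarrow> int \<Rightarrow> nat \<Rightarrow> int" where
  "e1 g a b = (\<lambda>i. if i < g then 0 else if i = g then a else b)"
definition e2 :: "int \<Rightarrow> int \<Rightarrow> nat \<Rightarrow> int" where
  "e2 a b = (\<lambda>i. if i = 0 then a else if i = 1 then b else 0)"

lemma A1_dims: "dim_row (matA1 g1 n1 B b1 b2) = g1+2" "dim_col (matA1 g1 n1 B b1 b2) = n1+3"
  by (simp_all add: matA1_def)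
lemma A2_dims: "dim_row (matA2 g2 n2 C c1 c2) = g2+2" "dim_col (matA2 g2 n2 C c1 c2) = n2+3"
  by (simp_all add: matA2_def)
lemma A_dims: "dim_row (matA g1 n1 g2 n2 B b1 b2 C c1 c2) = g1+g2+2" "dim_col (matA g1 n1 g2 n2 B b1 b2 C c1 c2) = n1+n2+3"
  by (simp_all add: matA_def)

lemma A1_cols: "\<forall>i<g1+2. matA1 g1 n1 B b1 b2 $$ (i,n1) = e1 g1 1 0 i"
  "\<forall>i<g1+2. matA1 g1 n1 B b1 b2 $$ (i,n1+1) = e1 g1 0 1 i"
  "\<forall>i<g1+2. matA1 g1 n1 B b1 b2 $$ (i,n1+2) = e1 g1 1 1 i"
  by (auto simp: matA1_def e1_def)
lemma A1_colj: "j < n1 \<Longrightarrow> i < g1+2 \<Longrightarrow> matA1 g1 n1 B b1 b2 $$ (i,j) =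
   (if i < g1 then B $$ (i,j) else if i = g1 then b1 $ j else b2 $ j)"
  by (simp add: matA1_def)
lemma A2_cols: "\<forall>i<g2+2. matA2 g2 n2 C c1 c2 $$ (i,n2) = e2 1 0 i"
  "\<forall>i<g2+2. matA2 g2 n2 C c1 c2 $$ (i,n2+1) = e2 0 1 i"
  "\<forall>i<g2+2. matA2 g2 n2 C c1 c2 $$ (i,n2+2) = e2 1 1 i"
  by (auto simp: matA2_def e2_def)
lemma A2_colj: "j < n2 \<Longrightarrow> i < g2+2 \<Longrightarrow> matA2 g2 n2 C c1 c2 $$ (i,j) =
   (if i = 0 then c1 $ j else if i = 1 then c2 $ j else C $$ (i-2,j))"
  by (simp add: matA2_def)

lemma A_B: "i < g1+2 \<Longrightarrow> j < n1+3 \<Longrightarrow>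
  matA g1 n1 g2 n2 B b1 b2 C c1 c2 $$ (i, if j < n1 then j else j + n2) = matA1 g1 n1 B b1 b2 $$ (i,j)"
  by (auto simp: matA_def matA1_def)
lemma A_B0: "k < g2 \<Longrightarrow> j < n1+3 \<Longrightarrow>
  matA g1 n1 g2 n2 B b1 b2 C c1 c2 $$ (g1+(k+2), if j < n1 then j else j + n2) = 0"
  by (auto simp: matA_def)
lemma A_C: "k < g2+2 \<Longrightarrow> j < n2+3 \<Longrightarrow>
  matA g1 n1 g2 n2 B b1 b2 C c1 c2 $$ (g1+k, n1+j) = matA2 g2 n2 C c1 c2 $$ (k,j)"
  by (auto simp: matA_def matA2_def)
lemma A_C0: "i < g1 \<Longrightarrow> j < n2+3 \<Longrightarrow>
  matA g1 n1 g2 n2 B b1 b2 C c1 c2 $$ (i, n1+j) = 0"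
  by (auto simp: matA_def)

lemma QF_e1:
  assumes sym: "\<And>i j. i < g+2 \<Longrightarrow> j < g+2 \<Longrightarrow> Q $$ (i,j) = Q $$ (j,i)"
  shows "QF Q (g+2) (\<lambda>i. real_of_int (e1 g a b i)) = (real_of_int a)^2 * Q $$ (g,g)
     + 2 * real_of_int a * real_of_int b * Q $$ (g,g+1) + (real_of_int b)^2 * Q $$ (g+1,g+1)"
proof -
  have z: "F1 Q g (\<lambda>i. real_of_int (e1 g a b i)) = 0 \<and> R1 Q g (\<lambda>i. real_of_int (e1 g a b i)) = 0 \<and>
     S1 Q g (\<lambda>i. real_of_int (e1 g a b i)) = 0" by (rule F1_zero) (simp add: e1_def)
  show ?thesis using L1[OF sym, where w="\<lambda>i. real_of_int (e1 g a b i)"] z by (simp add: e1_def)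
qed

lemma QF_e2:
  assumes sym: "\<And>i j. i < g+2 \<Longrightarrow> j < g+2 \<Longrightarrow> Q $$ (i,j) = Q $$ (j,i)"
  shows "QF Q (g+2) (\<lambda>i. real_of_int (e2 a b i)) = (real_of_int a)^2 * Q $$ (0,0)
     + 2 * real_of_int a * real_of_int b * Q $$ (0,1) + (real_of_int b)^2 * Q $$ (1,1)"
proof -
  have z: "F2 Q g (\<lambda>i. real_of_int (e2 a b i)) = 0 \<and> R2 Q g (\<lambda>i. real_of_int (e2 a b i)) = 0 \<and>
     S2 Q g (\<lambda>i. real_of_int (e2 a b i)) = 0" by (rule F2_zero) (simp add: e2_def)
  show ?thesis using L2[OF sym, where w="\<lambda>i. real_of_int (e2 a b i)"] z by (simp add: e2_def)
qed

lemma f1_cong: "(\<And>i. i < g \<Longrightarrow> w i = w' i) \<Longrightarrow> f1 Q g w = f1 Q g w'"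
  unfolding f1_def using F1_cong[of g w w' Q] R1_cong[of g w w' Q] S1_cong[of g w w' Q] by simp
lemma f2_cong: "(\<And>i. i < g \<Longrightarrow> w (i+2) = w' (i+2)) \<Longrightarrow> f2 Q g w = f2 Q g w'"
  unfolding f2_def using F2_cong[of g w w' Q] R2_cong[of g w w' Q] S2_cong[of g w w' Q] by simp

lemma f1_zero: "(\<And>i. i < g \<Longrightarrow> w i = 0) \<Longrightarrow> f1 Q g w = 0"
  unfolding f1_def using F1_zero[of g w Q] by simp
lemma f2_zero: "(\<And>i. i < g \<Longrightarrow> w (i+2) = 0) \<Longrightarrow> f2 Q g w = 0"
  unfolding f2_def using F2_zero[of g w Q] by simp

lemma f1_facts:
  assumes sym: "\<And>i j. i < g+2 \<Longrightarrow> j < g+2 \<Longrightarrow> Q $$ (i,j) = Q $$ (j,i)"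
    and d: "Q $$ (g,g) = 1" "Q $$ (g,g+1) = -1/2" "Q $$ (g+1,g+1) = 1"
    and pd: "\<And>w. \<exists>i<g+2. w i \<noteq> 0 \<Longrightarrow> QF Q (g+2) w > 0"
  shows "(\<exists>i<g. w i \<noteq> 0) \<Longrightarrow> f1 Q g w > 0" and "f1 Q g w \<ge> 0"
proof -
  show pos: "f1 Q g w > 0" if h: "\<exists>i<g. w i \<noteq> 0"
  proof -
    define v where "v = (\<lambda>i. if i < g then w i else if i = g then - pp1 (R1 Q g w) (S1 Q g w)
        else - pp2 (R1 Q g w) (S1 Q g w))"
    have ag: "\<And>i. i < g \<Longrightarrow> v i = w i" unfolding v_def by simp
    obtain i where "i < g" "w i \<noteq> 0" using h by blast
    hence "\<exists>i<g+2. v i \<noteq> 0" using ag by (intro exI[of _ i]) auto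
    hence "QF Q (g+2) v > 0" by (rule pd)
    also have "QF Q (g+2) v = f1 Q g v + phi (v g + pp1 (R1 Q g v) (S1 Q g v)) (v (g+1) + pp2 (R1 Q g v) (S1 Q g v))"
      by (rule core1[OF sym d])
    also have "f1 Q g v = f1 Q g w" by (rule f1_cong) (simp add: ag)
    also have "R1 Q g v = R1 Q g w" by (rule R1_cong) (simp add: ag)
    also have "S1 Q g v = S1 Q g w" by (rule S1_cong) (simp add: ag)
    finally show ?thesis by (simp add: v_def phi_def)
  qed
  show "f1 Q g w \<ge> 0"
  proof (cases "\<exists>i<g. w i \<noteq> 0")
    case True thus ?thesis using pos by fastforce
  next
    case False thus ?thesis using f1_zero[of g w Q] by auto
  qed
qed

lemma f2_facts:
  assumes sym: "\<And>i j. i < g+2 \<Longrightarrow> j < g+2 \<Longrightarrow> Q $$ (i,j) = Q $$ (j,i)"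
    and d: "Q $$ (0,0) = 1" "Q $$ (0,1) = -1/2" "Q $$ (1,1) = 1"
    and pd: "\<And>w. \<exists>i<g+2. w i \<noteq> 0 \<Longrightarrow> QF Q (g+2) w > 0"
  shows "(\<exists>i<g. w (i+2) \<noteq> 0) \<Longrightarrow> f2 Q g w > 0" and "f2 Q g w \<ge> 0"
proof -
  show pos: "f2 Q g w > 0" if h: "\<exists>i<g. w (i+2) \<noteq> 0"
  proof -
    define v where "v = (\<lambda>i. if i = 0 then - pp1 (R2 Q g w) (S2 Q g w) else if i = 1 then
        - pp2 (R2 Q g w) (S2 Q g w) else w i)"
    have ag: "\<And>i. i < g \<Longrightarrow> v (i+2) = w (i+2)" unfolding v_def by simp
    obtain i where "i < g" "w (i+2) \<noteq> 0" using h by blast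
    hence "\<exists>i<g+2. v i \<noteq> 0" using ag by (intro exI[of _ "i+2"]) auto
    hence "QF Q (g+2) v > 0" by (rule pd)
    also have "QF Q (g+2) v = f2 Q g v + phi (v 0 + pp1 (R2 Q g v) (S2 Q g v)) (v 1 + pp2 (R2 Q g v) (S2 Q g v))"
      by (rule core2[OF sym d])
    also have "f2 Q g v = f2 Q g w" by (rule f2_cong) (metis ag)
    also have "R2 Q g v = R2 Q g w" by (rule R2_cong) (metis ag)
    also have "S2 Q g v = S2 Q g w" by (rule S2_cong) (metis ag)
    finally show ?thesis by (simp add: v_def phi_def)
  qed
  show "f2 Q g w \<ge> 0"
  proof (cases "\<exists>i<g. w (i+2) \<noteq> 0")
    case True thus ?thesis using pos by fastforce
  next
    case False thus ?thesis using f2_zero[of g w Q] by auto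
  qed
qed

lemma f1_int:
  assumes sym: "\<And>i j. i < g+2 \<Longrightarrow> j < g+2 \<Longrightarrow> Q $$ (i,j) = Q $$ (j,i)"
    and d: "Q $$ (g,g) = 1" "Q $$ (g,g+1) = -1/2" "Q $$ (g+1,g+1) = 1"
    and ig: "\<And>f. \<exists>i<g+2. f i \<noteq> 0 \<Longrightarrow> QF Q (g+2) (\<lambda>i. real_of_int (f i)) \<ge> 1"
    and h: "\<exists>i<g. f i \<noteq> 0"
  shows "f1 Q g (\<lambda>i. real_of_int (f i)) \<ge> 2/3"
proof -
  define w where "w = (\<lambda>i. real_of_int (f i))"
  obtain z1 z2 :: int where z: "phi (of_int z1 + pp1 (R1 Q g w) (S1 Q g w)) (of_int z2 + pp2 (R1 Q g w) (S1 Q g w)) \<le> 1/3"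
    using cover by blast
  define h where "h = (\<lambda>i. if i < g then f i else if i = g then z1 else z2)"
  have ag: "\<And>i. i < g \<Longrightarrow> real_of_int (h i) = w i" unfolding h_def w_def by simp
  have "QF Q (g+2) (\<lambda>i. real_of_int (h i)) \<ge> 1" using h unfolding h_def by (intro ig) force
  also have "QF Q (g+2) (\<lambda>i. real_of_int (h i)) = f1 Q g (\<lambda>i. real_of_int (h i)) + phi (real_of_int (h g) + pp1 (R1 Q g (\<lambda>i. real_of_int (h i))) (S1 Q g (\<lambda>i. real_of_int (h i))))
       (real_of_int (h (g+1)) + pp2 (R1 Q g (\<lambda>i. real_of_int (h i))) (S1 Q g (\<lambda>i. real_of_int (h i))))"
    by (rule core1[OF sym d])
  also have "f1 Q g (\<lambda>i. real_of_int (h i)) = f1 Q g w" by (rule f1_cong) (simp add: ag)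
  also have "R1 Q g (\<lambda>i. real_of_int (h i)) = R1 Q g w" by (rule R1_cong) (simp add: ag)
  also have "S1 Q g (\<lambda>i. real_of_int (h i)) = S1 Q g w" by (rule S1_cong) (simp add: ag)
  finally show ?thesis using z unfolding w_def by (simp add: h_def)
qed

lemma f2_int:
  assumes sym: "\<And>i j. i < g+2 \<Longrightarrow> j < g+2 \<Longrightarrow> Q $$ (i,j) = Q $$ (j,i)"
    and d: "Q $$ (0,0) = 1" "Q $$ (0,1) = -1/2" "Q $$ (1,1) = 1"
    and ig: "\<And>f. \<exists>i<g+2. f i \<noteq> 0 \<Longrightarrow> QF Q (g+2) (\<lambda>i. real_of_int (f i)) \<ge> 1"
    and h: "\<exists>i<g. f (i+2) \<noteq> 0"
  shows "f2 Q g (\<lambda>i. real_of_int (f i)) \<ge> 2/3"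
proof -
  define w where "w = (\<lambda>i. real_of_int (f i))"
  obtain z1 z2 :: int where z: "phi (of_int z1 + pp1 (R2 Q g w) (S2 Q g w)) (of_int z2 + pp2 (R2 Q g w) (S2 Q g w)) \<le> 1/3"
    using cover by blast
  define h where "h = (\<lambda>i. if i = 0 then z1 else if i = 1 then z2 else f i)"
  have ag: "\<And>i. i < g \<Longrightarrow> real_of_int (h (i+2)) = w (i+2)" unfolding h_def w_def by simp
  obtain i where "i < g" "f (i+2) \<noteq> 0" using h by blast
  hence "\<exists>i<g+2. h i \<noteq> 0" unfolding h_def by (intro exI[of _ "i+2"]) auto
  hence "QF Q (g+2) (\<lambda>i. real_of_int (h i)) \<ge> 1" by (rule ig)
  also have "QF Q (g+2) (\<lambda>i. real_of_int (h i)) = f2 Q g (\<lambda>i. real_of_int (h i)) + phi (real_of_int (h 0) + pp1 (R2 Q g (\<lambda>i. real_of_int (h i))) (S2 Q g (\<lambda>i. real_of_int (h i))))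
       (real_of_int (h 1) + pp2 (R2 Q g (\<lambda>i. real_of_int (h i))) (S2 Q g (\<lambda>i. real_of_int (h i))))"
    by (rule core2[OF sym d])
  also have "f2 Q g (\<lambda>i. real_of_int (h i)) = f2 Q g w" by (rule f2_cong) (metis ag)
  also have "R2 Q g (\<lambda>i. real_of_int (h i)) = R2 Q g w" by (rule R2_cong) (metis ag)
  also have "S2 Q g (\<lambda>i. real_of_int (h i)) = S2 Q g w" by (rule S2_cong) (metis ag)
  finally show ?thesis using z unfolding w_def by (simp add: h_def)
qed



lemma sum43: "(x::real) \<ge> 2/3 \<Longrightarrow> y \<ge> 2/3 \<Longrightarrow> x + y + phi u v \<ge> 4/3"
  using phi_nonneg[of u v] by linarith

theorem lemma4p2p5:
  fixes g1 n1 g2 n2 :: nat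
    and B C :: "int mat" and b1 b2 c1 c2 :: "int vec"
    and Qb1 Qb2 :: "real mat"
  assumes B: "B \<in> carrier_mat g1 n1" and C: "C \<in> carrier_mat g2 n2"
    and b: "b1 \<in> carrier_vec n1" "b2 \<in> carrier_vec n1"
    and c: "c1 \<in> carrier_vec n2" "c2 \<in> carrier_vec n2"
    and tu1: "totally_unimodular (matA1 g1 n1 B b1 b2)" and s1: "simple_mat (matA1 g1 n1 B b1 b2)"
    and tu2: "totally_unimodular (matA2 g2 n2 C c1 c2)" and s2: "simple_mat (matA2 g2 n2 C c1 c2)"
    and w1: "well_suited Qb1 (matA1 g1 n1 B b1 b2)"
    and w2: "well_suited Qb2 (matA2 g2 n2 C c1 c2)"
  shows "Qb1 $$ (g1, g1) = 1 \<and> Qb1 $$ (g1, g1 + 1) = - 1/2 \<and>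
         Qb1 $$ (g1 + 1, g1) = - 1/2 \<and> Qb1 $$ (g1 + 1, g1 + 1) = 1 \<and>
         Qb2 $$ (0, 0) = 1 \<and> Qb2 $$ (0, 1) = - 1/2 \<and>
         Qb2 $$ (1, 0) = - 1/2 \<and> Qb2 $$ (1, 1) = 1 \<and>
         well_suited (glued_form g1 g2 Qb1 Qb2) (matA g1 n1 g2 n2 B b1 b2 C c1 c2)"
proof -
  let ?A1 = "matA1 g1 n1 B b1 b2" and ?A2 = "matA2 g2 n2 C c1 c2"
    and ?A = "matA g1 n1 g2 n2 B b1 b2 C c1 c2" and ?G = "glued_form g1 g2 Qb1 Qb2"
  note U1 = ws_unpack[OF w1 A1_dims(1)[symmetric]]
  note U2 = ws_unpack[OF w2 A2_dims(1)[symmetric]]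
  note sym1 = U1(2) and sym2 = U2(2) and pd1 = U1(3) and pd2 = U2(3) and ig1 = U1(4) and ig2 = U2(4)
  have col1: "QF Qb1 (g1+2) (\<lambda>i. real_of_int (e1 g1 a b i)) = 1"
    if "j < n1+3" "\<forall>i<g1+2. ?A1 $$ (i,j) = e1 g1 a b i" "(a,b) \<noteq> (0,0)" for j a b
  proof -
    have "\<exists>i<g1+2. e1 g1 a b i \<noteq> 0"
    proof (cases "a = 0")
      case True thus ?thesis using that(3) by (intro exI[of _ "g1+1"]) (auto simp: e1_def)
    next
      case False thus ?thesis by (intro exI[of _ "g1"]) (auto simp: e1_def)
    qed
    moreover have "CC ?A1 (g1+2) (e1 g1 a b)" unfolding CC_def A1_dims using that by blast
    ultimately show ?thesis using ig1 by blast
  qed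
  have col2: "QF Qb2 (g2+2) (\<lambda>i. real_of_int (e2 a b i)) = 1"
    if "j < n2+3" "\<forall>i<g2+2. ?A2 $$ (i,j) = e2 a b i" "(a,b) \<noteq> (0,0)" for j a b
  proof -
    have "\<exists>i<g2+2. e2 a b i \<noteq> 0"
    proof (cases "a = 0")
      case True thus ?thesis using that(3) by (intro exI[of _ "1"]) (auto simp: e2_def)
    next
      case False thus ?thesis by (intro exI[of _ "0"]) (auto simp: e2_def)
    qed
    moreover have "CC ?A2 (g2+2) (e2 a b)" unfolding CC_def A2_dims using that by blast
    ultimately show ?thesis using ig2 by blast
  qed
  have h10: "Qb1 $$ (g1,g1) = 1" using col1[OF _ A1_cols(1)] QF_e1[where g=g1 and Q=Qb1 and a=1 and b=0, OF sym1] by simp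
  have h01: "Qb1 $$ (g1+1,g1+1) = 1" using col1[OF _ A1_cols(2)] QF_e1[where g=g1 and Q=Qb1 and a=0 and b=1, OF sym1] by simp
  have h11: "Qb1 $$ (g1,g1+1) = -1/2" using col1[OF _ A1_cols(3)] QF_e1[where g=g1 and Q=Qb1 and a=1 and b=1, OF sym1] h10 h01 by simp
  have h11': "Qb1 $$ (g1+1,g1) = -1/2" using h11 sym1[of g1 "g1+1"] by simp
  have k10: "Qb2 $$ (0,0) = 1" using col2[OF _ A2_cols(1)] QF_e2[where g=g2 and Q=Qb2 and a=1 and b=0, OF sym2] by simp
  have k01: "Qb2 $$ (1,1) = 1" using col2[OF _ A2_cols(2)] QF_e2[where g=g2 and Q=Qb2 and a=0 and b=1, OF sym2] by simp
  have k11: "Qb2 $$ (0,1) = -1/2" using col2[OF _ A2_cols(3)] QF_e2[where g=g2 and Q=Qb2 and a=1 and b=1, OF sym2] k10 k01 by simp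
  have k11': "Qb2 $$ (1,0) = -1/2" using k11 sym2[of 0 1] by simp
  note d1 = h10 h11 h01 and d2 = k10 k11 k01
  have s1': "simple_mat ?A1" by (rule s1)
  have Bnz: "\<exists>i<g1. B $$ (i,j) \<noteq> 0" if j: "j < n1" for j
  proof (rule ccontr)
    assume nz: "\<not> (\<exists>i<g1. B $$ (i,j) \<noteq> 0)"
    define a where "a = b1 $ j"
    define bb where "bb = b2 $ j"
    have colj: "\<forall>i<g1+2. ?A1 $$ (i,j) = e1 g1 a bb i"
      using nz j by (auto simp: A1_colj e1_def a_def bb_def)
    obtain r where r: "r < g1+2" "?A1 $$ (r,j) \<noteq> 0" using simple_nz[OF s1, of j] j by (auto simp: A1_dims)
    have ne: "(a,bb) \<noteq> (0,0)" using r colj by (auto simp: e1_def split: if_splits)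
    have "QF Qb1 (g1+2) (\<lambda>i. real_of_int (e1 g1 a bb i)) = 1" using col1[OF _ colj ne] j by simp
    hence "real_of_int (a^2 - a*bb + bb^2) = real_of_int 1"
      using QF_e1[where g=g1 and Q=Qb1 and a=a and b=bb, OF sym1] d1 by (simp add: power2_eq_square)
    hence "a^2 - a*bb + bb^2 = 1" by (simp only: of_int_eq_iff)
    note cases = int_eis[OF this]
    have P: "False" if k: "k \<in> {n1, n1+1, n1+2}" and kc: "\<forall>i<g1+2. ?A1 $$ (i,k) = e1 g1 aa bb' i"
       and pr: "\<forall>i<g1+2. real_of_int (e1 g1 a bb i) = cc * real_of_int (e1 g1 aa bb' i)" for k aa bb' cc
    proof (rule simple_prop[OF s1, of j k cc])
      show "j < dim_col ?A1" "k < dim_col ?A1" "j \<noteq> k" using j k by (auto simp: A1_dims)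
      fix r assume "r < dim_row ?A1"
      thus "real_of_int (?A1 $$ (r, j)) = cc * real_of_int (?A1 $$ (r, k))" using colj kc pr by (simp add: A1_dims)
    qed
    from cases show False
    proof (elim disjE conjE)
      assume "a = 1" "bb = 0" thus False by (intro P[of n1 1 0 1]) (use A1_cols(1) in \<open>auto simp: e1_def\<close>)
    next
      assume "a = -1" "bb = 0" thus False by (intro P[of n1 1 0 "-1"]) (use A1_cols(1) in \<open>auto simp: e1_def\<close>)
    next
      assume "a = 0" "bb = 1" thus False by (intro P[of "n1+1" 0 1 1]) (use A1_cols(2) in \<open>auto simp: e1_def\<close>)
    next
      assume "a = 0" "bb = -1" thus False by (intro P[of "n1+1" 0 1 "-1"]) (use A1_cols(2) in \<open>auto simp: e1_def\<close>)
    next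
      assume "a = 1" "bb = 1" thus False by (intro P[of "n1+2" 1 1 1]) (use A1_cols(3) in \<open>auto simp: e1_def\<close>)
    next
      assume "a = -1" "bb = -1" thus False by (intro P[of "n1+2" 1 1 "-1"]) (use A1_cols(3) in \<open>auto simp: e1_def\<close>)
    qed
  qed
  have Cnz: "\<exists>i<g2. C $$ (i,j) \<noteq> 0" if j: "j < n2" for j
  proof (rule ccontr)
    assume nz: "\<not> (\<exists>i<g2. C $$ (i,j) \<noteq> 0)"
    define a where "a = c1 $ j"
    define bb where "bb = c2 $ j"
    have colj: "\<forall>i<g2+2. ?A2 $$ (i,j) = e2 a bb i"
      using nz j by (auto simp: A2_colj e2_def a_def bb_def)
    obtain r where r: "r < g2+2" "?A2 $$ (r,j) \<noteq> 0" using simple_nz[OF s2, of j] j by (auto simp: A2_dims)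
    have ne: "(a,bb) \<noteq> (0,0)" using r colj by (auto simp: e2_def split: if_splits)
    have "QF Qb2 (g2+2) (\<lambda>i. real_of_int (e2 a bb i)) = 1" using col2[OF _ colj ne] j by simp
    hence "real_of_int (a^2 - a*bb + bb^2) = real_of_int 1"
      using QF_e2[where g=g2 and Q=Qb2 and a=a and b=bb, OF sym2] d2 by (simp add: power2_eq_square)
    hence "a^2 - a*bb + bb^2 = 1" by (simp only: of_int_eq_iff)
    note cases = int_eis[OF this]
    have P: "False" if k: "k \<in> {n2, n2+1, n2+2}" and kc: "\<forall>i<g2+2. ?A2 $$ (i,k) = e2 aa bb' i"
       and pr: "\<forall>i<g2+2. real_of_int (e2 a bb i) = cc * real_of_int (e2 aa bb' i)" for k aa bb' cc
    proof (rule simple_prop[OF s2, of j k cc])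
      show "j < dim_col ?A2" "k < dim_col ?A2" "j \<noteq> k" using j k by (auto simp: A2_dims)
      fix r assume "r < dim_row ?A2"
      thus "real_of_int (?A2 $$ (r, j)) = cc * real_of_int (?A2 $$ (r, k))" using colj kc pr by (simp add: A2_dims)
    qed
    from cases show False
    proof (elim disjE conjE)
      assume "a = 1" "bb = 0" thus False by (intro P[of n2 1 0 1]) (use A2_cols(1) in \<open>auto simp: e2_def\<close>)
    next
      assume "a = -1" "bb = 0" thus False by (intro P[of n2 1 0 "-1"]) (use A2_cols(1) in \<open>auto simp: e2_def\<close>)
    next
      assume "a = 0" "bb = 1" thus False by (intro P[of "n2+1" 0 1 1]) (use A2_cols(2) in \<open>auto simp: e2_def\<close>)
    next
      assume "a = 0" "bb = -1" thus False by (intro P[of "n2+1" 0 1 "-1"]) (use A2_cols(2) in \<open>auto simp: e2_def\<close>)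
    next
      assume "a = 1" "bb = 1" thus False by (intro P[of "n2+2" 1 1 1]) (use A2_cols(3) in \<open>auto simp: e2_def\<close>)
    next
      assume "a = -1" "bb = -1" thus False by (intro P[of "n2+2" 1 1 "-1"]) (use A2_cols(3) in \<open>auto simp: e2_def\<close>)
    qed
  qed
  have gsym: "?G $$ (i,j) = ?G $$ (j,i)" if "i < g1+g2+2" "j < g1+g2+2" for i j
  proof -
    have a: "Qb1 $$ (i,j) = Qb1 $$ (j,i)" if "i < g1" "j < g1" for i j using sym1 that by simp
    have b: "Qb2 $$ (i+2,j+2) = Qb2 $$ (j+2,i+2)" if "i < g2" "j < g2" for i j using sym2 that by simp
    show ?thesis using that a b[of "i-g1-2" "j-g1-2"] by (auto simp: glued_form_def Let_def)
  qed
  note ig1' = conjunct1[OF ig1] and ig2' = conjunct1[OF ig2]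
  have pdG: "QF ?G (g1+g2+2) w > 0" if h: "\<exists>i<g1+g2+2. w i \<noteq> 0" for w
  proof -
    note cG = coreG[of g1 g2 Qb1 Qb2 w]
    have nn: "f1 Qb1 g1 w \<ge> 0" "f2 Qb2 g2 (\<lambda>k. w (g1+k)) \<ge> 0"
      using f1_facts(2)[OF sym1 d1 pd1] f2_facts(2)[OF sym2 d2 pd2] by auto
    note pn = phi_nonneg
    consider (x) "\<exists>i<g1. w i \<noteq> 0" | (y) "\<exists>k<g2. w (g1+(k+2)) \<noteq> 0"
      | (z) "\<forall>i<g1. w i = 0" "\<forall>k<g2. w (g1+(k+2)) = 0" by blast
    thus ?thesis
    proof cases
      case x
      have "f1 Qb1 g1 w > 0" using f1_facts(1)[OF sym1 d1 pd1 x] .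
      thus ?thesis unfolding cG using nn pn by (smt (verit))
    next
      case y
      have "f2 Qb2 g2 (\<lambda>k. w (g1+k)) > 0" using f2_facts(1)[OF sym2 d2 pd2] y by simp
      thus ?thesis unfolding cG using nn pn by (smt (verit))
    next
      case z
      have z1: "f1 Qb1 g1 w = 0" "R1 Qb1 g1 w = 0" "S1 Qb1 g1 w = 0"
        using z f1_zero[of g1 w Qb1] F1_zero[of g1 w Qb1] by auto
      have z2: "f2 Qb2 g2 (\<lambda>k. w (g1+k)) = 0" "R2 Qb2 g2 (\<lambda>k. w (g1+k)) = 0" "S2 Qb2 g2 (\<lambda>k. w (g1+k)) = 0"
        using z f2_zero[of g2 "\<lambda>k. w (g1+k)" Qb2] F2_zero[of g2 "\<lambda>k. w (g1+k)" Qb2] by auto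
      obtain i where i: "i < g1+g2+2" "w i \<noteq> 0" using h by blast
      have "i = g1 \<or> i = g1+1"
      proof (rule ccontr)
        assume ne: "\<not> (i = g1 \<or> i = g1+1)"
        have "\<not> i < g1" using i z(1) by auto
        hence "i = g1 + ((i-g1-2)+2)" "i - g1 - 2 < g2" using i ne by auto
        thus False using z(2) i by metis
      qed
      hence "(w g1, w (g1+1)) \<noteq> (0,0)" using i by auto
      hence "phi (w g1) (w (g1+1)) > 0" by (rule phi_pos)
      thus ?thesis unfolding cG z1 z2 by (simp add: pp1_def pp2_def)
    qed
  qed
  have AB1: "?A $$ (i, if j < n1 then j else j + n2) = ?A1 $$ (i,j)" if "i < g1+2" "j < n1+3" for i j
    using that by (rule A_B)
  have AB0: "?A $$ (g1+(k+2), if j < n1 then j else j + n2) = 0" if "k < g2" "j < n1+3" for k j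
    using that by (rule A_B0)
  have AC1: "?A $$ (g1+k, n1+j) = ?A2 $$ (k,j)" if "k < g2+2" "j < n2+3" for k j
    using that by (rule A_C)
  have AC0: "?A $$ (i, n1+j) = 0" if "i < g1" "j < n2+3" for i j
    using that by (rule A_C0)
  have AB: "?A $$ (i,j) = B $$ (i,j)" if "i < g1" "j < n1" for i j
    using AB1[of i j] A1_colj[of j n1 i g1 B b1 b2] that by simp
  have AC: "?A $$ (g1+(k+2), j) = C $$ (k, j-n1)" if "k < g2" "n1 \<le> j" "j < n1+n2" for k j
    using AC1[of "k+2" "j-n1"] A2_colj[of "j-n1" n2 "k+2" g2 C c1 c2] that by simp
  have CCY: "CC ?A (g1+g2+2) f \<longleftrightarrow> CC ?A2 (g2+2) (\<lambda>k. f (g1+k))" if x0: "\<forall>i<g1. f i = 0" for f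
  proof
    assume "CC ?A (g1+g2+2) f"
    then obtain j where j: "j < n1+n2+3" and e: "(\<forall>i<g1+g2+2. ?A $$ (i,j) = f i) \<or> (\<forall>i<g1+g2+2. ?A $$ (i,j) = - f i)"
      unfolding CC_def A_dims by blast
    have "\<not> j < n1"
    proof
      assume jn: "j < n1"
      obtain i where i: "i < g1" "B $$ (i,j) \<noteq> 0" using Bnz[OF jn] by blast
      have "?A $$ (i,j) = 0" using e x0 i by auto
      thus False using AB[OF i(1) jn] i by simp
    qed
    hence jj: "j = n1 + (j - n1)" "j - n1 < n2+3" using j by auto
    have "\<forall>k<g2+2. ?A2 $$ (k, j-n1) = ?A $$ (g1+k, j)"
      using AC1[of _ "j-n1"] jj by auto
    thus "CC ?A2 (g2+2) (\<lambda>k. f (g1+k))" unfolding CC_def A2_dims using e jj(2)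
      by (intro exI[of _ "j-n1"]) auto
  next
    assume "CC ?A2 (g2+2) (\<lambda>k. f (g1+k))"
    then obtain j where j: "j < n2+3" and e: "(\<forall>k<g2+2. ?A2 $$ (k,j) = f (g1+k)) \<or> (\<forall>k<g2+2. ?A2 $$ (k,j) = - f (g1+k))"
      unfolding CC_def A2_dims by blast
    have r: "?A $$ (i, n1+j) = (if i < g1 then 0 else ?A2 $$ (i-g1, j))" if "i < g1+g2+2" for i
      using AC0[of i j] AC1[of "i-g1" j] that j by auto
    show "CC ?A (g1+g2+2) f" unfolding CC_def A_dims
    proof (intro exI[of _ "n1+j"] conjI)
      show "n1 + j < n1+n2+3" using j by simp
      have P: "\<forall>i<g1+g2+2. ?A $$ (i, n1+j) = s * f i"
        if pos: "\<forall>k<g2+2. ?A2 $$ (k,j) = s * f (g1+k)" for s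
      proof (intro allI impI)
        fix i assume i: "i < g1+g2+2"
        show "?A $$ (i, n1+j) = s * f i"
        proof (cases "i < g1")
          case True thus ?thesis using r[OF i] x0 by simp
        next
          case False hence ii: "i - g1 < g2+2" "g1 + (i-g1) = i" using i by auto
          show ?thesis using r[OF i] pos[rule_format, OF ii(1)] False ii(2) by simp
        qed
      qed
      show "(\<forall>i<g1+g2+2. ?A $$ (i, n1+j) = f i) \<or> (\<forall>i<g1+g2+2. ?A $$ (i, n1+j) = - f i)"
        using e P[of 1] P[of "-1"] by auto
    qed
  qed
  have CCZ: "CC ?A (g1+g2+2) f \<longleftrightarrow> CC ?A1 (g1+2) f" if y0: "\<forall>k<g2. f (g1+(k+2)) = 0" for f
  proof
    assume "CC ?A (g1+g2+2) f"
    then obtain j where j: "j < n1+n2+3" and e: "(\<forall>i<g1+g2+2. ?A $$ (i,j) = f i) \<or> (\<forall>i<g1+g2+2. ?A $$ (i,j) = - f i)"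
      unfolding CC_def A_dims by blast
    have "\<not> (n1 \<le> j \<and> j < n1+n2)"
    proof
      assume jn: "n1 \<le> j \<and> j < n1+n2"
      obtain k where k: "k < g2" "C $$ (k,j-n1) \<noteq> 0"
      proof -
        have "j - n1 < n2" using jn by auto
        from Cnz[OF this] show ?thesis using that by blast
      qed
      have "?A $$ (g1+(k+2),j) = 0" using e y0 k by auto
      thus False using AC[OF k(1)] jn k by simp
    qed
    define j' where "j' = (if j < n1 then j else j - n2)"
    have jj: "j' < n1+3" "(if j' < n1 then j' else j' + n2) = j" using j \<open>\<not> (n1 \<le> j \<and> j < n1+n2)\<close>
      unfolding j'_def by auto
    have "\<forall>i<g1+2. ?A1 $$ (i, j') = ?A $$ (i, j)"
      using AB1[of _ j'] jj by auto
    thus "CC ?A1 (g1+2) f" unfolding CC_def A1_dims using e jj(1)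
      by (intro exI[of _ "j'"]) auto
  next
    assume "CC ?A1 (g1+2) f"
    then obtain j where j: "j < n1+3" and e: "(\<forall>k<g1+2. ?A1 $$ (k,j) = f k) \<or> (\<forall>k<g1+2. ?A1 $$ (k,j) = - f k)"
      unfolding CC_def A1_dims by blast
    define J where "J = (if j < n1 then j else j + n2)"
    have P: "\<forall>i<g1+g2+2. ?A $$ (i, J) = s * f i"
      if pos: "\<forall>k<g1+2. ?A1 $$ (k,j) = s * f k" for s
    proof (intro allI impI)
      fix i assume i: "i < g1+g2+2"
      show "?A $$ (i, J) = s * f i"
      proof (cases "i < g1+2")
        case True thus ?thesis using AB1[OF True j] pos unfolding J_def by simp
      next
        case False
        define k where "k = i - g1 - 2"
        have k: "k < g2" "i = g1+(k+2)" using i False unfolding k_def by auto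
        have "?A $$ (g1+(k+2), J) = 0" using AB0[OF k(1) j] unfolding J_def .
        moreover have "f (g1+(k+2)) = 0" using y0 k(1) by blast
        ultimately show ?thesis using k(2) by simp
      qed
    qed
    show "CC ?A (g1+g2+2) f" unfolding CC_def A_dims
    proof (intro exI[of _ J] conjI)
      show "J < n1+n2+3" using j unfolding J_def by simp
      show "(\<forall>i<g1+g2+2. ?A $$ (i, J) = f i) \<or> (\<forall>i<g1+g2+2. ?A $$ (i, J) = - f i)"
        using e P[of 1] P[of "-1"] by auto
    qed
  qed
  have ig1'': "QF Qb1 (g1+2) (\<lambda>i. real_of_int (f i)) \<ge> 1" if "\<exists>i<g1+2. f i \<noteq> 0" for f
    using ig1[OF that] by blast
  have ig2'': "QF Qb2 (g2+2) (\<lambda>i. real_of_int (f i)) \<ge> 1" if "\<exists>i<g2+2. f i \<noteq> 0" for f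
    using ig2[OF that] by blast
  have igG: "QF ?G (g1+g2+2) (\<lambda>i. real_of_int (f i)) \<ge> 1 \<and>
      (QF ?G (g1+g2+2) (\<lambda>i. real_of_int (f i)) = 1 \<longleftrightarrow> CC ?A (g1+g2+2) f)"
    if h: "\<exists>i<g1+g2+2. f i \<noteq> 0" for f
  proof -
    note cG = coreG[of g1 g2 Qb1 Qb2 "\<lambda>i. real_of_int (f i)"]
    consider (xy) "\<exists>i<g1. f i \<noteq> 0" "\<exists>k<g2. f (g1+(k+2)) \<noteq> 0"
      | (y0) "\<forall>i<g1. f i = 0" | (x0) "\<exists>i<g1. f i \<noteq> 0" "\<forall>k<g2. f (g1+(k+2)) = 0" by blast
    thus ?thesis
    proof cases
      case xy
      have a: "f1 Qb1 g1 (\<lambda>i. real_of_int (f i)) \<ge> 2/3" using f1_int[OF sym1 d1 ig1'' xy(1)] .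
      have b: "f2 Qb2 g2 (\<lambda>k. real_of_int (f (g1+k))) \<ge> 2/3"
        using f2_int[OF sym2 d2 ig2'', of "\<lambda>k. f (g1+k)"] xy(2) by (simp add: add.assoc)
      have q: "QF ?G (g1+g2+2) (\<lambda>i. real_of_int (f i)) \<ge> 4/3"
        unfolding cG by (rule sum43[OF a b])
      have nc: "\<not> CC ?A (g1+g2+2) f"
      proof
        assume "CC ?A (g1+g2+2) f"
        then obtain j where j: "j < n1+n2+3" and e: "(\<forall>i<g1+g2+2. ?A $$ (i,j) = f i) \<or> (\<forall>i<g1+g2+2. ?A $$ (i,j) = - f i)"
          unfolding CC_def A_dims by blast
        show False
        proof (cases "j < n1")
          case True
          obtain k where k: "k < g2" "f (g1+(k+2)) \<noteq> 0" using xy(2) by blast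
          have "?A $$ (g1+(k+2), j) = 0" using AB0[OF k(1), of j] j True by simp
          moreover have "g1+(k+2) < g1+g2+2" using k by simp
          ultimately show False using e k(2) by force
        next
          case False
          obtain i where i: "i < g1" "f i \<noteq> 0" using xy(1) by blast
          have "?A $$ (i, n1+(j-n1)) = 0" using AC0[OF i(1), of "j-n1"] j False by simp
          hence "?A $$ (i, j) = 0" using False by simp
          moreover have "i < g1+g2+2" using i by simp
          ultimately show False using e i(2) by force
        qed
      qed
      show ?thesis using q nc by simp
    next
      case y0
      have z1: "f1 Qb1 g1 (\<lambda>i. real_of_int (f i)) = 0" "R1 Qb1 g1 (\<lambda>i. real_of_int (f i)) = 0"
        "S1 Qb1 g1 (\<lambda>i. real_of_int (f i)) = 0"
        using y0 f1_zero[of g1 "\<lambda>i. real_of_int (f i)" Qb1] F1_zero[of g1 "\<lambda>i. real_of_int (f i)" Qb1] by auto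
      have eq: "QF ?G (g1+g2+2) (\<lambda>i. real_of_int (f i)) = QF Qb2 (g2+2) (\<lambda>k. real_of_int (f (g1+k)))"
        using core2[OF sym2 d2, where w="\<lambda>k. real_of_int (f (g1+k))"] unfolding cG z1 by (simp add: pp1_def pp2_def)
      have nz: "\<exists>k<g2+2. f (g1+k) \<noteq> 0"
      proof -
        obtain i where i: "i < g1+g2+2" "f i \<noteq> 0" using h by blast
        hence "\<not> i < g1" using y0 by auto
        hence "i - g1 < g2+2" "g1 + (i - g1) = i" using i by auto
        thus ?thesis using i(2) by metis
      qed
      show ?thesis unfolding eq CCY[OF y0] using ig2[OF nz] .
    next
      case x0
      have z2: "f2 Qb2 g2 (\<lambda>k. real_of_int (f (g1+k))) = 0" "R2 Qb2 g2 (\<lambda>k. real_of_int (f (g1+k))) = 0"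
        "S2 Qb2 g2 (\<lambda>k. real_of_int (f (g1+k))) = 0"
        using x0(2) f2_zero[of g2 "\<lambda>k. real_of_int (f (g1+k))" Qb2] F2_zero[of g2 "\<lambda>k. real_of_int (f (g1+k))" Qb2]
        by (auto simp: add.assoc)
      have eq: "QF ?G (g1+g2+2) (\<lambda>i. real_of_int (f i)) = QF Qb1 (g1+2) (\<lambda>i. real_of_int (f i))"
        using core1[OF sym1 d1, where w="\<lambda>i. real_of_int (f i)"] unfolding cG z2 by (simp add: pp1_def pp2_def)
      have nz: "\<exists>i<g1+2. f i \<noteq> 0"
      proof -
        obtain i where "i < g1" "f i \<noteq> 0" using x0(1) by blast
        thus ?thesis by (intro exI[of _ i]) auto
      qed
      show ?thesis unfolding eq CCZ[OF x0(2)] using ig1[OF nz] .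
    qed
  qed
  have Gc: "?G \<in> carrier_mat (g1+g2+2) (g1+g2+2)" by (simp add: glued_form_def Let_def)
  have "well_suited ?G ?A" by (rule ws_pack[OF A_dims(1)[symmetric] Gc gsym pdG igG])
  thus ?thesis using h10 h11 h11' h01 k10 k11 k11' k01 by simp
qed


end
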